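(* Let $\mathsf{S}$ be a random sprinkle in $d$-dimensional Minkowski spacetime, i.e. the set of points of a Poisson point process with intensity $\rho\cdot\nu$ ($\rho>0$ constant, $\nu$ Lebesgue volume measure), with the causal order restricted from Minkowski spacetime. Then, with probability $1$, $\mathsf{S}$ contains no pair of distinct singleton-symmetric elements.
   Context: Minkowski spacetime $\mathbb{M}^d$ is $\mathbb{R}^{1,d-1}$ with metric $\mathrm{diag}(1,-1,\dots,-1)$, partially ordered by $x\le y$ iff $y-x$ is zero or a future-directed causal vector. In a poset $P$, $b$ covers $a$ if $a<b$ and no $c$ satisfies $a<c<b$; $L^-(a)$ is the set of elements covered by $a$ and $L^+(a)$ the set of elements covering $a$. Two elements $a,b\in P$ are singleton-symmetric if $L^-(a)=L^-(b)$ and $L^+(a)=L^+(b)$. *)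

theory Defs
  imports "HOL-Probability.Probability"
begin

text \<open>Points of d-dimensional Minkowski spacetime, d = CARD('n) + 1:
  a time coordinate and a spatial vector in real^'n.  The product type is a
  Euclidean space, so lborel is its Lebesgue (volume) measure.\<close>

type_synonym 'n mpoint = "real \<times> (real ^ 'n)"

definition mink_sq :: "'n::finite mpoint \<Rightarrow> real" where
  "mink_sq v = (fst v)\<^sup>2 - (\<Sum>i\<in>UNIV. (snd v $ i)\<^sup>2)"

definition causal_le :: "'n::finite mpoint \<Rightarrow> 'n mpoint \<Rightarrow> bool" where
  "causal_le x y \<longleftrightarrow> y - x = 0 \<or> (mink_sq (y - x) \<ge> 0 \<and> fst (y - x) > 0)"

definition covers_in :: "'a set \<Rightarrow> ('a \<Rightarrow> 'a \<Rightarrow> bool) \<Rightarrow> 'a \<Rightarrow> 'a \<Rightarrow> bool" where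
  "covers_in P le a b \<longleftrightarrow> a \<in> P \<and> b \<in> P \<and> le a b \<and> a \<noteq> b \<and>
     \<not> (\<exists>c\<in>P. le a c \<and> a \<noteq> c \<and> le c b \<and> c \<noteq> b)"

definition Lminus :: "'a set \<Rightarrow> ('a \<Rightarrow> 'a \<Rightarrow> bool) \<Rightarrow> 'a \<Rightarrow> 'a set" where
  "Lminus P le a = {x \<in> P. covers_in P le x a}"

definition Lplus :: "'a set \<Rightarrow> ('a \<Rightarrow> 'a \<Rightarrow> bool) \<Rightarrow> 'a \<Rightarrow> 'a set" where
  "Lplus P le a = {x \<in> P. covers_in P le a x}"

definition singleton_symmetric :: "'a set \<Rightarrow> ('a \<Rightarrow> 'a \<Rightarrow> bool) \<Rightarrow> 'a \<Rightarrow> 'a \<Rightarrow> bool" where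
  "singleton_symmetric P le a b \<longleftrightarrow> Lminus P le a = Lminus P le b \<and> Lplus P le a = Lplus P le b"

definition poisson_point_process ::
  "'b measure \<Rightarrow> real \<Rightarrow> ('b \<Rightarrow> ('a::euclidean_space) set) \<Rightarrow> bool" where
  "poisson_point_process M \<rho> S \<longleftrightarrow>
     (\<forall>A. A \<in> sets lborel \<and> emeasure lborel A < \<infinity> \<longrightarrow>
        (AE \<omega> in M. finite (S \<omega> \<inter> A)) \<and>
        (\<lambda>\<omega>. card (S \<omega> \<inter> A)) \<in> measurable M (count_space UNIV) \<and>
        (\<forall>k::nat. measure M {\<omega> \<in> space M. card (S \<omega> \<inter> A) = k} =
            (\<rho> * measure lborel A) ^ k / fact k * exp (- (\<rho> * measure lborel A)))) \<and>
     (\<forall>(I::nat set) F. (\<forall>i\<in>I. F i \<in> sets lborel \<and> emeasure lborel (F i) < \<infinity>) \<and>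
        disjoint_family_on F I \<longrightarrow>
        prob_space.indep_vars M (\<lambda>_. count_space UNIV) (\<lambda>i \<omega>. card (S \<omega> \<inter> F i)) I)"

end

theory Submission
  imports Defs
begin


lemma norm_sq_cart: "(norm (v::real^'n))\<^sup>2 = (\<Sum>i\<in>UNIV. (v $ i)\<^sup>2)"
  by (simp only: power2_norm_eq_inner) (simp add: inner_vec_def power2_eq_square)

lemma causal_iff: "causal_le x (y::'n::finite mpoint) \<longleftrightarrow> norm (snd y - snd x) \<le> fst y - fst x"
proof -
  have ms: "mink_sq (y - x) = (fst y - fst x)\<^sup>2 - (norm (snd y - snd x))\<^sup>2"
    by (simp add: mink_sq_def norm_sq_cart)
  show ?thesis
  proof
    assume "causal_le x y"
    then consider "y - x = 0" | "mink_sq (y - x) \<ge> 0" "fst (y - x) > 0" unfolding causal_le_def by blast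
    then show "norm (snd y - snd x) \<le> fst y - fst x"
    proof cases
      case 1 then have "y = x" by simp then show ?thesis by simp
    next
      case 2
      then have "(norm (snd y - snd x))\<^sup>2 \<le> (fst y - fst x)\<^sup>2" "fst y - fst x > 0" using ms by auto
      then show ?thesis using power2_le_imp_le by fastforce
    qed
  next
    assume h: "norm (snd y - snd x) \<le> fst y - fst x"
    show "causal_le x y"
    proof (cases "fst y - fst x = 0")
      case True
      then have "snd y = snd x" "fst y = fst x" using h by auto
      then have "y = x" by (simp add: prod_eq_iff)
      then show ?thesis by (simp add: causal_le_def)
    next
      case False
      then have "fst y - fst x > 0" using h norm_ge_zero[of "snd y - snd x"] by linarith
      moreover have "(norm (snd y - snd x))\<^sup>2 \<le> (fst y - fst x)\<^sup>2"
        using h by (simp add: power_mono)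
      ultimately show ?thesis unfolding causal_le_def using ms by simp
    qed
  qed
qed

lemma causal_trans: "causal_le x y \<Longrightarrow> causal_le y z \<Longrightarrow> causal_le x (z::'n::finite mpoint)"
  unfolding causal_iff using norm_triangle_ineq[of "snd z - snd y" "snd y - snd x"] by simp

lemma causal_antisym: "causal_le x y \<Longrightarrow> causal_le y x \<Longrightarrow> x = (y::'n::finite mpoint)"
proof -
  assume "causal_le x y" "causal_le y x"
  then have h: "norm (snd y - snd x) \<le> fst y - fst x" "norm (snd y - snd x) \<le> fst x - fst y"
    unfolding causal_iff by (auto simp: norm_minus_commute)
  then have "norm (snd y - snd x) = 0" "fst x = fst y" using norm_ge_zero[of "snd y - snd x"] by linarith+
  then show "x = y" by (simp add: prod_eq_iff)
qed

lemma causal_strict_time: "causal_le x y \<Longrightarrow> x \<noteq> y \<Longrightarrow> fst x < fst (y::'n::finite mpoint)"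
proof -
  assume h: "causal_le x y" and ne: "x \<noteq> y"
  have h1: "norm (snd y - snd x) \<le> fst y - fst x" using h by (simp add: causal_iff)
  show "fst x < fst y"
  proof (rule ccontr)
    assume "\<not> fst x < fst y"
    then have "norm (snd y - snd x) = 0" "fst x = fst y" using h1 norm_ge_zero[of "snd y - snd x"] by linarith+
    then have "x = y" by (simp add: prod_eq_iff)
    then show False using ne by simp
  qed
qed

definition cube :: "'n::finite mpoint \<Rightarrow> real \<Rightarrow> 'n mpoint set" where
  "cube c r = cbox (fst c - r, \<chi> i. snd c $ i - r) (fst c + r, \<chi> i. snd c $ i + r)"

lemma mem_cube: "x \<in> cube c r \<longleftrightarrow> \<bar>fst x - fst c\<bar> \<le> r \<and> (\<forall>i. \<bar>snd x $ i - snd c $ i\<bar> \<le> r)"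
proof -
  obtain t u where x: "x = (t, u)" by (cases x)
  have "x \<in> cube c r \<longleftrightarrow> (fst c - r \<le> t \<and> t \<le> fst c + r) \<and> (\<forall>i. snd c $ i - r \<le> u $ i \<and> u $ i \<le> snd c $ i + r)"
    by (simp add: cube_def x cbox_Pair_eq mem_box_cart)
  also have "\<dots> \<longleftrightarrow> \<bar>fst x - fst c\<bar> \<le> r \<and> (\<forall>i. \<bar>snd x $ i - snd c $ i\<bar> \<le> r)"
  proof -
    have pw: "\<And>y z::real. (z - r \<le> y \<and> y \<le> z + r) \<longleftrightarrow> \<bar>y - z\<bar> \<le> r" by (auto simp: abs_le_iff)
    show ?thesis unfolding x using pw by simp
  qed
  finally show ?thesis .
qed

definition piece :: "'n::finite mpoint \<Rightarrow> real^'n \<Rightarrow> nat \<Rightarrow> nat \<Rightarrow> 'n mpoint set" where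
  "piece q d m k = cube (q + (real k * 3 * (1 / (real m + 1))) *\<^sub>R (1, d /\<^sub>R norm d)) (1 / (real m + 1))"

lemma mem_piece: "x \<in> piece q d m k \<longleftrightarrow>
   \<bar>fst x - (fst q + real k * 3 * (1 / (real m + 1)))\<bar> \<le> 1 / (real m + 1) \<and>
   (\<forall>i. \<bar>snd x $ i - (snd q $ i + real k * 3 * (1 / (real m + 1)) * (d /\<^sub>R norm d) $ i)\<bar> \<le> 1 / (real m + 1))"
  unfolding piece_def mem_cube by (simp add: mult.assoc)

lemma piece_geo:
  fixes q a b x :: "'n::finite mpoint" and d :: "real^'n" and m k :: nat
  defines "\<epsilon> \<equiv> 1 / (real m + 1)" and "e \<equiv> d /\<^sub>R norm d" and "C \<equiv> real CARD('n)"
  assumes d: "d \<noteq> 0" and x: "x \<in> piece q d m k"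
    and C1: "norm (snd q - snd a) + (C + 1) * \<epsilon> \<le> fst q - fst a"
    and C2: "e \<bullet> (snd q - snd b) - (fst q - fst b) > (C + 1) * \<epsilon>"
  shows "causal_le a x \<and> x \<noteq> a \<and> \<not> causal_le b x"
proof -
  define s where "s = real k * 3 * \<epsilon>"
  have eps: "\<epsilon> > 0" unfolding \<epsilon>_def by simp
  have s0: "s \<ge> 0" unfolding s_def using eps by simp
  have ne: "norm e = 1" unfolding e_def using d by simp
  have xt: "\<bar>fst x - (fst q + s)\<bar> \<le> \<epsilon>" and xs: "\<And>i. \<bar>snd x $ i - (snd q $ i + s * e $ i)\<bar> \<le> \<epsilon>"
    using x unfolding mem_piece s_def \<epsilon>_def e_def by auto
  define w where "w = snd x - snd q - s *\<^sub>R e"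
  have "norm w \<le> (\<Sum>i\<in>UNIV. \<bar>w $ i\<bar>)" by (rule norm_le_l1_cart)
  also have "\<dots> \<le> (\<Sum>i\<in>(UNIV::'n set). \<epsilon>)"
    by (rule sum_mono) (use xs in \<open>auto simp: w_def algebra_simps\<close>)
  also have "\<dots> = C * \<epsilon>" by (simp add: C_def)
  finally have nw: "norm w \<le> C * \<epsilon>" .
  have sx: "snd x = snd q + s *\<^sub>R e + w" unfolding w_def by simp
  have "norm (snd x - snd a) = norm ((snd q - snd a) + s *\<^sub>R e + w)" by (simp add: sx algebra_simps)
  also have "\<dots> \<le> norm (snd q - snd a) + norm (s *\<^sub>R e) + norm w"
    using norm_triangle_ineq[of "snd q - snd a + s *\<^sub>R e" w] norm_triangle_ineq[of "snd q - snd a" "s *\<^sub>R e"]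
    by linarith
  also have "\<dots> \<le> norm (snd q - snd a) + s + C * \<epsilon>" using ne s0 nw by simp
  finally have n1: "norm (snd x - snd a) \<le> norm (snd q - snd a) + s + C * \<epsilon>" .
  have C0: "C \<ge> 1" unfolding C_def by (simp add: Suc_le_eq)
  have xt1: "fst x \<ge> fst q + s - \<epsilon>" "fst x \<le> fst q + s + \<epsilon>" using xt by (simp_all add: abs_le_iff)
  have Ce: "(C + 1) * \<epsilon> = C * \<epsilon> + \<epsilon>" by (simp add: algebra_simps)
  have Ce2: "C * \<epsilon> \<ge> \<epsilon>" using C0 eps by simp
  have "causal_le a x" unfolding causal_iff using n1 xt1 C1 Ce by linarith
  moreover have "fst x > fst a" using xt1 C1 Ce Ce2 eps s0 norm_ge_zero[of "snd q - snd a"] by linarith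
  moreover have "\<not> causal_le b x"
  proof
    assume "causal_le b x"
    then have h: "norm (snd x - snd b) \<le> fst x - fst b" by (simp add: causal_iff)
    have "e \<bullet> (snd x - snd b) \<le> norm e * norm (snd x - snd b)" by (rule norm_cauchy_schwarz)
    then have h2: "e \<bullet> (snd x - snd b) \<le> norm (snd x - snd b)" using ne by simp
    have "e \<bullet> w \<ge> - (norm e * norm w)" using norm_cauchy_schwarz[of "-e" w] by simp
    then have ew: "e \<bullet> w \<ge> - C * \<epsilon>" using ne nw by simp
    have ee: "e \<bullet> e = 1" using ne by (simp add: dot_square_norm)
    have "e \<bullet> (snd x - snd b) = e \<bullet> (snd q - snd b) + s + e \<bullet> w"
      by (simp add: sx inner_diff_right inner_add_right ee algebra_simps)
    then show False using h h2 ew xt1 C2 Ce by linarith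
  qed
  ultimately show ?thesis by auto
qed

lemma choose_params:
  fixes a b :: "'n::finite mpoint" and D :: "'n mpoint set" and Dn :: "(real^'n) set"
  assumes nb: "\<not> causal_le b a"
    and D: "\<And>X. open X \<Longrightarrow> X \<noteq> {} \<Longrightarrow> \<exists>d\<in>D. d \<in> X"
    and Dn: "\<And>X. open X \<Longrightarrow> X \<noteq> {} \<Longrightarrow> \<exists>d\<in>Dn. d \<in> X"
  shows "\<exists>q\<in>D. \<exists>d\<in>Dn. \<exists>m. d \<noteq> 0 \<and>
     (\<forall>k x. x \<in> piece q d m k \<longrightarrow> causal_le a x \<and> x \<noteq> a \<and> \<not> causal_le b x)"
proof -
  define w where "w = snd a - snd b"
  define \<delta> where "\<delta> = norm w - (fst a - fst b)"
  have dpos: "\<delta> > 0" using nb unfolding causal_iff \<delta>_def w_def by simp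
  obtain e0 :: "real^'n" where e0: "norm e0 = 1" "e0 \<bullet> w = norm w"
  proof (cases "w = 0")
    case True
    show ?thesis by (rule that[of "axis undefined 1"]) (simp_all add: True)
  next
    case False
    have n1: "norm (w /\<^sub>R norm w) = 1" using False by simp
    have "(w /\<^sub>R norm w) \<bullet> w = (w \<bullet> w) / norm w" by (simp add: divide_inverse mult.commute)
    also have "w \<bullet> w = norm w * norm w" by (simp add: power2_eq_square[symmetric] power2_norm_eq_inner)
    finally have "(w /\<^sub>R norm w) \<bullet> w = norm w" using False by simp
    then show ?thesis using n1 by (rule that[rotated])
  qed
  define r where "r = fst a - fst b + \<delta> / 2"
  define U where "U = {d::real^'n. 0 < d \<bullet> w - r * norm d}"
  have oU: "open U" unfolding U_def by (rule open_Collect_less) (rule continuous_intros)+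
  have e0U: "e0 \<in> U" using e0 dpos unfolding U_def r_def \<delta>_def by (simp add: field_simps)
  then have "U \<noteq> {}" by auto
  from Dn[OF oU this] obtain d where dD: "d \<in> Dn" and dU: "d \<in> U" by (elim bexE)
  have d0: "d \<noteq> 0" using dU unfolding U_def by auto
  define e where "e = d /\<^sub>R norm d"
  have ew: "e \<bullet> w > r"
  proof -
    have "d \<bullet> w > r * norm d" using dU unfolding U_def by simp
    then have "(d \<bullet> w) / norm d > r" using d0 by (simp add: pos_less_divide_eq)
    then show ?thesis unfolding e_def by (simp add: divide_inverse mult.commute)
  qed
  define C where "C = real CARD('n)"
  obtain m :: nat where m: "8 * (C + 1) / \<delta> < real m"
    using reals_Archimedean2 by blast
  define \<epsilon> where "\<epsilon> = 1 / (real m + 1)"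
  define K where "K = (C + 1) * \<epsilon>"
  have Cpos: "C + 1 > 0" unfolding C_def by simp
  have epos: "\<epsilon> > 0" unfolding \<epsilon>_def by simp
  have Kpos: "K > 0" unfolding K_def using Cpos epos by simp
  have "8 * (C + 1) < real m * \<delta>" using m dpos by (simp add: pos_divide_less_eq)
  then have h8: "8 * (C + 1) < \<delta> * (real m + 1)" using dpos by (simp add: algebra_simps)
  have "K = (C + 1) / (real m + 1)" unfolding K_def \<epsilon>_def by simp
  then have "8 * K = 8 * (C + 1) / (real m + 1)" by simp
  also have "\<dots> < \<delta>" using h8 by (simp add: pos_divide_less_eq)
  finally have K8: "8 * K < \<delta>" .
  define V where "V = {q::'n mpoint. norm (snd q - snd a) + K < fst q - fst a} \<inter>
     {q. K < e \<bullet> (snd q - snd b) - (fst q - fst b)}"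
  have oV: "open V" unfolding V_def by (rule open_Int; rule open_Collect_less; (rule continuous_intros)+)
  have aV: "a + (2 * K, 0) \<in> V"
  proof -
    have "e \<bullet> (snd a - snd b) > fst a - fst b + \<delta> / 2" using ew unfolding r_def w_def .
    then show ?thesis unfolding V_def using Kpos K8 by simp
  qed
  then have "V \<noteq> {}" by auto
  from D[OF oV this] obtain q where qD: "q \<in> D" and qV: "q \<in> V" by (elim bexE)
  have q1: "norm (snd q - snd a) + (real CARD('n) + 1) * (1 / (real m + 1)) \<le> fst q - fst a"
    using qV unfolding V_def K_def C_def \<epsilon>_def by simp
  have q2: "(d /\<^sub>R norm d) \<bullet> (snd q - snd b) - (fst q - fst b) > (real CARD('n) + 1) * (1 / (real m + 1))"
    using qV unfolding V_def K_def C_def \<epsilon>_def e_def by simp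
  have "\<forall>k x. x \<in> piece q d m k \<longrightarrow> causal_le a x \<and> x \<noteq> a \<and> \<not> causal_le b x"
  proof (intro allI impI)
    fix k x assume "x \<in> piece q d m k"
    then show "causal_le a x \<and> x \<noteq> a \<and> \<not> causal_le b x" by (rule piece_geo[OF d0 _ q1 q2])
  qed
  then have "\<exists>m. d \<noteq> 0 \<and> (\<forall>k x. x \<in> piece q d m k \<longrightarrow> causal_le a x \<and> x \<noteq> a \<and> \<not> causal_le b x)"
    using d0 by (intro exI[of _ m]) simp
  then have "\<exists>d\<in>Dn. \<exists>m. d \<noteq> 0 \<and> (\<forall>k x. x \<in> piece q d m k \<longrightarrow> causal_le a x \<and> x \<noteq> a \<and> \<not> causal_le b x)"
    using dD by (rule bexI)
  then show ?thesis using qD by (rule bexI)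
qed

lemma interval_bounded:
  fixes a c x :: "'n::finite mpoint"
  assumes "causal_le a c" "causal_le c x"
  shows "norm c \<le> \<bar>fst a\<bar> + \<bar>fst x\<bar> + norm (snd a) + (fst x - fst a)"
proof -
  have h1: "norm (snd c - snd a) \<le> fst c - fst a" "norm (snd x - snd c) \<le> fst x - fst c"
    using assms by (simp_all add: causal_iff)
  have t: "fst a \<le> fst c" "fst c \<le> fst x" using h1 norm_ge_zero[of "snd c - snd a"] norm_ge_zero[of "snd x - snd c"] by linarith+
  have "norm (snd c) \<le> norm (snd a) + norm (snd c - snd a)"
    using norm_triangle_ineq[of "snd a" "snd c - snd a"] by simp
  moreover have "norm c \<le> norm (fst c) + norm (snd c)" using norm_Pair_le[of "fst c" "snd c"] by simp
  ultimately show ?thesis using h1 t by auto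
qed

lemma key_det:
  fixes S :: "'n::finite mpoint set" and D :: "'n mpoint set" and Dn :: "(real^'n) set"
  assumes fin: "\<And>n::nat. finite (S \<inter> cball 0 (real n))"
    and hit: "\<And>q d m. q \<in> D \<Longrightarrow> d \<in> Dn \<Longrightarrow> \<exists>k. S \<inter> piece q d m k \<noteq> {}"
    and D: "\<And>X. open X \<Longrightarrow> X \<noteq> {} \<Longrightarrow> \<exists>d\<in>D. d \<in> X"
    and Dn: "\<And>X. open X \<Longrightarrow> X \<noteq> {} \<Longrightarrow> \<exists>d\<in>Dn. d \<in> X"
    and aS: "a \<in> S" and bS: "b \<in> S" and nb: "\<not> causal_le b a"
  shows "Lplus S causal_le a \<noteq> Lplus S causal_le b"
proof -
  obtain q d m where qD: "q \<in> D" and dD: "d \<in> Dn" and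
    P: "\<And>k x. x \<in> piece q d m k \<Longrightarrow> causal_le a x \<and> x \<noteq> a \<and> \<not> causal_le b x"
    using choose_params[OF nb D Dn] by blast
  obtain k where "S \<inter> piece q d m k \<noteq> {}" using hit[OF qD dD] by blast
  then obtain x where xS: "x \<in> S" and xp: "x \<in> piece q d m k" by blast
  have ax: "causal_le a x" "x \<noteq> a" and bx: "\<not> causal_le b x" using P[OF xp] by auto
  define X where "X = {c \<in> S. causal_le a c \<and> c \<noteq> a \<and> causal_le c x}"
  have xX: "x \<in> X" unfolding X_def using xS ax by (simp add: causal_iff)
  define R where "R = \<bar>fst a\<bar> + \<bar>fst x\<bar> + norm (snd a) + (fst x - fst a)"
  obtain n :: nat where n: "R \<le> real n" using real_arch_simple by blast
  have "X \<subseteq> S \<inter> cball 0 (real n)"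
  proof
    fix c assume "c \<in> X"
    then have "c \<in> S" "causal_le a c" "causal_le c x" unfolding X_def by auto
    moreover from interval_bounded[OF this(2,3)] have "norm c \<le> real n" using n unfolding R_def by linarith
    ultimately show "c \<in> S \<inter> cball 0 (real n)" by simp
  qed
  then have finX: "finite X" using fin[of n] by (rule finite_subset)
  obtain c where c: "is_arg_min fst (\<lambda>y. y \<in> X) c"
    using ex_is_arg_min_if_finite[OF finX] xX by blast
  have cX: "c \<in> X" and cmin: "\<And>y. y \<in> X \<Longrightarrow> \<not> fst y < fst c" using c unfolding is_arg_min_def by auto
  have cS: "c \<in> S" and ac: "causal_le a c" "c \<noteq> a" and cx: "causal_le c x" using cX unfolding X_def by auto
  have "covers_in S causal_le a c"
    unfolding covers_in_def
  proof (intro conjI)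
    show "\<not> (\<exists>e\<in>S. causal_le a e \<and> a \<noteq> e \<and> causal_le e c \<and> e \<noteq> c)"
    proof
      assume "\<exists>e\<in>S. causal_le a e \<and> a \<noteq> e \<and> causal_le e c \<and> e \<noteq> c"
      then obtain e where e: "e \<in> S" "causal_le a e" "a \<noteq> e" "causal_le e c" "e \<noteq> c" by blast
      have "e \<in> X" unfolding X_def using e causal_trans[OF e(4) cx] by auto
      moreover have "fst e < fst c" using causal_strict_time[OF e(4,5)] .
      ultimately show False using cmin by blast
    qed
  qed (use aS cS ac in auto)
  then have "c \<in> Lplus S causal_le a" unfolding Lplus_def using cS by simp
  moreover have "c \<notin> Lplus S causal_le b"
  proof
    assume "c \<in> Lplus S causal_le b"
    then have "causal_le b c" unfolding Lplus_def covers_in_def by simp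
    then show False using causal_trans[OF _ cx] bx by blast
  qed
  ultimately show ?thesis by blast
qed

lemma det_main:
  fixes S :: "'n::finite mpoint set" and D :: "'n mpoint set" and Dn :: "(real^'n) set"
  assumes fin: "\<And>n::nat. finite (S \<inter> cball 0 (real n))"
    and hit: "\<And>q d m. q \<in> D \<Longrightarrow> d \<in> Dn \<Longrightarrow> \<exists>k. S \<inter> piece q d m k \<noteq> {}"
    and D: "\<And>X. open X \<Longrightarrow> X \<noteq> {} \<Longrightarrow> \<exists>d\<in>D. d \<in> X"
    and Dn: "\<And>X. open X \<Longrightarrow> X \<noteq> {} \<Longrightarrow> \<exists>d\<in>Dn. d \<in> X"
  shows "\<not> (\<exists>a\<in>S. \<exists>b\<in>S. a \<noteq> b \<and> singleton_symmetric S causal_le a b)"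
proof
  assume "\<exists>a\<in>S. \<exists>b\<in>S. a \<noteq> b \<and> singleton_symmetric S causal_le a b"
  then obtain a b where ab: "a \<in> S" "b \<in> S" "a \<noteq> b" and ss: "Lplus S causal_le a = Lplus S causal_le b"
    unfolding singleton_symmetric_def by blast
  show False
  proof (cases "causal_le b a")
    case False
    then show False using key_det[OF fin hit D Dn ab(1,2)] ss by blast
  next
    case True
    then have "\<not> causal_le a b" using causal_antisym ab(3) by blast
    then show False using key_det[OF fin hit D Dn ab(2,1)] ss by metis
  qed
qed

lemma cube_borel: "cube c r \<in> sets lborel"
  unfolding cube_def by (simp add: borel_closed)

lemma cube_emeasure:
  fixes c :: "'n::finite mpoint"
  assumes r: "r \<ge> 0"
  shows "emeasure lborel (cube c r) = ennreal ((2 * r) ^ card (Basis :: 'n mpoint set))"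
proof -
  define l :: "'n mpoint" where "l = (fst c - r, \<chi> i. snd c $ i - r)"
  define u :: "'n mpoint" where "u = (fst c + r, \<chi> i. snd c $ i + r)"
  have ul: "u - l = (2 * r, \<chi> i. 2 * r)" unfolding u_def l_def by (simp add: vec_eq_iff)
  have b: "(u - l) \<bullet> b = 2 * r" if "b \<in> Basis" for b
    using that unfolding ul by (auto simp: Basis_prod_def Basis_vec_def inner_axis)
  have lu: "l \<bullet> b \<le> u \<bullet> b" if "b \<in> Basis" for b
  proof -
    have "u \<bullet> b - l \<bullet> b = 2 * r" using b[OF that] by (simp add: inner_diff_left)
    then show ?thesis using r by simp
  qed
  have "emeasure lborel (cube c r) = ennreal (\<Prod>b\<in>Basis. (u - l) \<bullet> b)"
    unfolding cube_def l_def[symmetric] u_def[symmetric] emeasure_lborel_cbox_eq using lu by simp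
  also have "(\<Prod>b\<in>Basis. (u - l) \<bullet> b) = (\<Prod>b\<in>(Basis :: 'n mpoint set). 2 * r)"
    using b by (rule prod.cong[OF refl])
  finally show ?thesis by simp
qed

lemma piece_borel: "piece q d m k \<in> sets lborel"
  unfolding piece_def by (rule cube_borel)

lemma piece_disj:
  assumes "k \<noteq> l" shows "piece q d m k \<inter> piece q d m l = {}"
proof (rule ccontr)
  assume "piece q d m k \<inter> piece q d m l \<noteq> {}"
  then obtain x where "x \<in> piece q d m k" "x \<in> piece q d m l" by blast
  then have h: "\<bar>fst x - (fst q + real k * 3 * (1 / (real m + 1)))\<bar> \<le> 1 / (real m + 1)"
      "\<bar>fst x - (fst q + real l * 3 * (1 / (real m + 1)))\<bar> \<le> 1 / (real m + 1)"
    unfolding mem_piece by blast+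
  define \<epsilon> where "\<epsilon> = 1 / (real m + 1)"
  have eps: "\<epsilon> > 0" unfolding \<epsilon>_def by simp
  have "\<bar>real k * 3 * \<epsilon> - real l * 3 * \<epsilon>\<bar> \<le> 2 * \<epsilon>" using h unfolding \<epsilon>_def[symmetric] by linarith
  moreover have "real k * 3 * \<epsilon> - real l * 3 * \<epsilon> = (real k - real l) * (3 * \<epsilon>)" by (simp add: algebra_simps)
  moreover have "\<bar>(real k - real l) * (3 * \<epsilon>)\<bar> = \<bar>real k - real l\<bar> * (3 * \<epsilon>)" using eps by (simp add: abs_mult)
  ultimately have "\<bar>real k - real l\<bar> * (3 * \<epsilon>) \<le> 2 * \<epsilon>" by simp
  moreover have "\<bar>real k - real l\<bar> \<ge> 1" using assms by linarith
  moreover have "1 * (3 * \<epsilon>) \<le> \<bar>real k - real l\<bar> * (3 * \<epsilon>)"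
    using \<open>\<bar>real k - real l\<bar> \<ge> 1\<close> eps by (intro mult_right_mono) auto
  ultimately have "3 * \<epsilon> \<le> 2 * \<epsilon>" by linarith
  then show False using eps by simp
qed

lemma union_pieces_emeasure:
  fixes q :: "'n::finite mpoint"
  shows "emeasure lborel (\<Union>k\<in>{..<N}. piece q d m k) =
     ennreal (real N * (2 * (1 / (real m + 1))) ^ card (Basis :: 'n::finite mpoint set))"
proof -
  have "emeasure lborel (\<Union>k\<in>{..<N}. piece q d m k) = (\<Sum>k\<in>{..<N}. emeasure lborel (piece q d m k))"
  proof (rule sum_emeasure[symmetric])
    show "(\<lambda>k. piece q d m k) ` {..<N} \<subseteq> sets lborel" using piece_borel by blast
    show "disjoint_family_on (\<lambda>k. piece q d m k) {..<N}"
      unfolding disjoint_family_on_def using piece_disj by blast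
  qed simp
  also have "\<dots> = (\<Sum>k\<in>{..<N}. ennreal ((2 * (1 / (real m + 1))) ^ card (Basis :: 'n mpoint set)))"
  proof (rule sum.cong[OF refl])
    fix k
    show "emeasure lborel (piece q d m k) = ennreal ((2 * (1 / (real m + 1))) ^ card (Basis :: 'n mpoint set))"
      unfolding piece_def by (rule cube_emeasure) simp
  qed
  also have "\<dots> = ennreal (real N * (2 * (1 / (real m + 1))) ^ card (Basis :: 'n mpoint set))"
  proof -
    define X where "X = (2 * (1 / (real m + 1))) ^ card (Basis :: 'n mpoint set)"
    have X0: "X \<ge> 0" unfolding X_def by simp
    have "(\<Sum>k\<in>{..<N}. ennreal X) = of_nat N * ennreal X" by simp
    also have "\<dots> = ennreal (real N) * ennreal X" by (simp add: ennreal_of_nat_eq_real_of_nat)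
    also have "\<dots> = ennreal (real N * X)" using X0 by (simp add: ennreal_mult)
    finally show ?thesis unfolding X_def .
  qed
  finally show ?thesis .
qed



lemma ppp_hit_gen:
  fixes S :: "'b \<Rightarrow> ('a::euclidean_space) set" and A :: "nat \<Rightarrow> 'a set"
  assumes M: "prob_space M" and rho: "\<rho> > 0" and ppp: "poisson_point_process M \<rho> S"
    and A: "\<And>N. A N \<in> sets lborel" and Am: "\<And>N. emeasure lborel (A N) = ennreal (real N * c)" and c: "c > 0"
  shows "AE \<omega> in M. \<exists>N. S \<omega> \<inter> A N \<noteq> {}"
proof -
  interpret prob_space M by (rule M)
  define E where "E N = {\<omega> \<in> space M. card (S \<omega> \<inter> A N) = 0}" for N
  have E: "E N \<in> sets M \<and> prob (E N) = exp (- (\<rho> * (real N * c)))" for N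
  proof -
    have fin: "emeasure lborel (A N) < \<infinity>" using Am[of N] by simp
    have ml: "measure lborel (A N) = real N * c" by (rule measure_eq_emeasure_eq_ennreal) (use c Am in auto)
    from ppp A[of N] fin have meas: "(\<lambda>\<omega>. card (S \<omega> \<inter> A N)) \<in> measurable M (count_space UNIV)"
      and pr: "measure M {\<omega> \<in> space M. card (S \<omega> \<inter> A N) = 0} =
            (\<rho> * measure lborel (A N)) ^ 0 / fact 0 * exp (- (\<rho> * measure lborel (A N)))"
      unfolding poisson_point_process_def by blast+
    have "(\<lambda>\<omega>. card (S \<omega> \<inter> A N)) -` {0} \<inter> space M \<in> sets M"
      by (rule measurable_sets[OF meas]) simp
    moreover have "(\<lambda>\<omega>. card (S \<omega> \<inter> A N)) -` {0} \<inter> space M = E N" unfolding E_def by auto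
    ultimately show ?thesis using pr ml unfolding E_def by simp
  qed
  define B where "B = {\<omega> \<in> space M. \<forall>N. card (S \<omega> \<inter> A N) = 0}"
  have Bs: "B \<in> sets M" unfolding B_def
    by (rule sets.sets_Collect_countable_All) (use E in \<open>simp add: E_def\<close>)
  have Ble: "prob B \<le> exp (- (\<rho> * (real N * c)))" for N
  proof -
    have "B \<subseteq> E N" unfolding B_def E_def by auto
    then have "prob B \<le> prob (E N)" using E[of N] by (intro finite_measure_mono) auto
    then show ?thesis using E[of N] by simp
  qed
  have B0: "prob B = 0"
  proof (rule ccontr)
    assume "prob B \<noteq> 0"
    then have p: "prob B > 0" using measure_nonneg[of M B] by linarith
    obtain N :: nat where N: "1 / (\<rho> * c * prob B) < real N" using reals_Archimedean2 by blast
    define y where "y = \<rho> * (real N * c)"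
    have pos: "\<rho> * c * prob B > 0" using rho c p by simp
    have "1 < real N * (\<rho> * c * prob B)" using N pos by (simp add: divide_less_eq)
    then have yp: "1 < y * prob B" unfolding y_def by (simp add: algebra_simps)
    have ypos: "y > 0" using yp p by (smt (verit) mult_nonpos_nonneg mult_nonneg_nonneg)
    have "exp y \<ge> 1 + y" by (rule exp_ge_add_one_self)
    then have "exp (- y) \<le> 1 / (1 + y)" using ypos by (simp add: exp_minus field_simps)
    also have "\<dots> < prob B"
      using yp ypos p by (simp add: divide_less_eq algebra_simps)
    finally have "exp (- y) < prob B" .
    then show False using Ble[of N] unfolding y_def by simp
  qed
  have "B \<in> null_sets M" using Bs B0 by (simp add: emeasure_eq_measure null_setsI)
  moreover have "{\<omega> \<in> space M. \<not> (\<exists>N. S \<omega> \<inter> A N \<noteq> {})} \<subseteq> B" unfolding B_def by auto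
  ultimately show ?thesis by (rule AE_I')
qed

lemma ppp_fin:
  fixes S :: "'b \<Rightarrow> ('a::euclidean_space) set"
  assumes ppp: "poisson_point_process M \<rho> S"
  shows "AE \<omega> in M. \<forall>n::nat. finite (S \<omega> \<inter> cball 0 (real n))"
proof -
  have "AE \<omega> in M. finite (S \<omega> \<inter> cball 0 (real n))" for n :: nat
  proof -
    have "cball (0::'a) (real n) \<in> sets lborel" by simp
    moreover have "emeasure lborel (cball (0::'a) (real n)) < \<infinity>" by (rule emeasure_bounded_finite) simp
    ultimately show ?thesis using ppp unfolding poisson_point_process_def by blast
  qed
  then show ?thesis by (simp add: AE_all_countable)
qed


theorem mainTheorem16:
  fixes M :: "'b measure" and \<rho> :: real and S :: "'b \<Rightarrow> ('n::finite) mpoint set"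
  assumes "prob_space M"
    and "\<rho> > 0"
    and "poisson_point_process M \<rho> S"
  shows "AE \<omega> in M. \<not> (\<exists>a\<in>S \<omega>. \<exists>b\<in>S \<omega>. a \<noteq> b \<and> singleton_symmetric (S \<omega>) causal_le a b)"
proof -
  obtain D :: "'n mpoint set" where D: "countable D" "\<And>X. open X \<Longrightarrow> X \<noteq> {} \<Longrightarrow> \<exists>d\<in>D. d \<in> X"
    using countable_dense_exists by blast
  obtain Dn :: "(real^'n) set" where Dn: "countable Dn" "\<And>X. open X \<Longrightarrow> X \<noteq> {} \<Longrightarrow> \<exists>d\<in>Dn. d \<in> X"
    using countable_dense_exists by blast
  have fin: "AE \<omega> in M. \<forall>n::nat. finite (S \<omega> \<inter> cball 0 (real n))" by (rule ppp_fin[OF assms(3)])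
  have hit1: "AE \<omega> in M. \<exists>k. S \<omega> \<inter> piece q d m k \<noteq> {}" for q :: "'n mpoint" and d m
  proof -
    define c where "c = (2 * (1 / (real m + 1))) ^ card (Basis :: 'n mpoint set)"
    have cpos: "c > 0" unfolding c_def by simp
    have "AE \<omega> in M. \<exists>N. S \<omega> \<inter> (\<Union>k\<in>{..<N}. piece q d m k) \<noteq> {}"
    proof (rule ppp_hit_gen[OF assms(1,2,3)])
      show "(\<Union>k\<in>{..<N}. piece q d m k) \<in> sets lborel" for N
        by (rule sets.finite_UN) (simp_all only: piece_borel finite_lessThan)
      show "emeasure lborel (\<Union>k\<in>{..<N}. piece q d m k) = ennreal (real N * c)" for N
        unfolding c_def by (rule union_pieces_emeasure)
      show "c > 0" by (rule cpos)
    qed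
    then show ?thesis by (rule eventually_mono) blast
  qed
  have "AE \<omega> in M. \<forall>t\<in>D \<times> Dn \<times> (UNIV :: nat set). \<exists>k. S \<omega> \<inter> piece (fst t) (fst (snd t)) (snd (snd t)) k \<noteq> {}"
  proof (subst AE_ball_countable)
    show "countable (D \<times> Dn \<times> (UNIV :: nat set))" using D(1) Dn(1) by simp
    show "\<forall>t\<in>D \<times> Dn \<times> (UNIV :: nat set). AE \<omega> in M. \<exists>k. S \<omega> \<inter> piece (fst t) (fst (snd t)) (snd (snd t)) k \<noteq> {}"
      using hit1 by blast
  qed
  then show ?thesis using fin
  proof eventually_elim
    case (elim \<omega>)
    show ?case
    proof (rule det_main[of "S \<omega>" D Dn])
      show "finite (S \<omega> \<inter> cball 0 (real n))" for n using elim(2) by blast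
      show "\<exists>k. S \<omega> \<inter> piece q d m k \<noteq> {}" if "q \<in> D" "d \<in> Dn" for q d m
        using elim(1) that by force
    qed (use D Dn in blast)+
  qed
qed

end
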